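(* Let $1\le t\le k$, $d\ge k+1$ and $0<\beta\le1/2$. Let $X\in\mathbb{R}^{t\times t}$ be a symmetric matrix and $Z\in\mathbb{R}^t$ a vector with $|X_{ij}|\le\frac{\beta}{t+1}$ for all $i,j\in[t]$ and $|Z_i|\le\frac{\beta}{t+1}$ for all $i\in[t]$. Then there exist $y_1,\dots,y_t\in[-1,1]^d$ such that $X_{ij}=\langle y_i,y_j\rangle$ for $i\ne j$, $X_{ii}=\langle y_i,y_i\rangle-\beta$, and $Z_i=\langle y_i,\mathbf 1\rangle$ for all $i,j\in[t]$, where $\mathbf 1=(1,\dots,1)\in\mathbb{R}^d$. *)

theory Defs
  imports Complex_Main
begin

end

theory Submission
  imports Defs
begin


lemma sum_if_skip:
  fixes f :: "nat \<Rightarrow> real"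
  assumes "i < m"
  shows "(\<Sum>j<m. if j = i then 0 else f j) = (\<Sum>j<m. f j) - f i"
proof -
  have "(\<Sum>j<m. if j = i then 0 else f j) = (\<Sum>j<m. f j - (if j = i then f j else 0))"
    by (rule sum.cong) auto
  also have "\<dots> = (\<Sum>j<m. f j) - f i" using assms by (simp add: sum_subtractf)
  finally show ?thesis .
qed

lemma abs_sub_div_le:
  fixes x p q a :: real
  assumes "a > 0"
  shows "\<bar>x - p * q / a\<bar> \<le> \<bar>x\<bar> + \<bar>p\<bar> / a * \<bar>q\<bar>"
proof -
  have "\<bar>x - p * q / a\<bar> \<le> \<bar>x\<bar> + \<bar>p * q / a\<bar>" by (rule abs_triangle_ineq4)
  also have "\<bar>p * q / a\<bar> = \<bar>p\<bar> / a * \<bar>q\<bar>" using assms by (simp add: abs_mult)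
  finally show ?thesis .
qed

lemma chol:
  fixes A :: "nat \<Rightarrow> nat \<Rightarrow> real"
  shows "(\<forall>i<n. \<forall>j<n. A i j = A j i) \<Longrightarrow>
         (\<forall>i<n. (\<Sum>j<n. if j = i then 0 else \<bar>A i j\<bar>) < A i i) \<Longrightarrow>
         \<exists>L. (\<forall>i<n. \<forall>j<n. (\<Sum>k<n. L i k * L j k) = A i j) \<and> L 0 0 = sqrt (A 0 0) \<and> (\<forall>k>0. L 0 k = 0)"
proof (induction n arbitrary: A)
  case 0
  show ?case by (rule exI[of _ "\<lambda>i k. if k = 0 then sqrt (A 0 0) else 0"]) auto
next
  case (Suc m)
  note sym = Suc.prems(1) and dom = Suc.prems(2)
  define a where "a = A 0 0"
  define c where "c j = A 0 (Suc j)" for j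
  have row0: "(\<Sum>j<Suc m. if j = 0 then 0 else \<bar>A 0 j\<bar>) < a" using dom a_def by auto
  have S: "(\<Sum>j<m. \<bar>c j\<bar>) < a" using row0 unfolding sum.lessThan_Suc_shift by (simp add: c_def)
  have apos: "a > 0" proof -
    have "0 \<le> (\<Sum>j<m. \<bar>c j\<bar>)" by (rule sum_nonneg) auto
    then show ?thesis using S by linarith
  qed
  define A' where "A' i j = A (Suc i) (Suc j) - c i * c j / a" for i j
  have sym': "\<forall>i<m. \<forall>j<m. A' i j = A' j i"
  proof (intro allI impI)
    fix i j assume "i < m" "j < m"
    then have "A (Suc i) (Suc j) = A (Suc j) (Suc i)" using sym by auto
    then show "A' i j = A' j i" by (simp add: A'_def mult.commute)
  qed
  have dom': "\<forall>i<m. (\<Sum>j<m. if j = i then 0 else \<bar>A' i j\<bar>) < A' i i"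
  proof (intro allI impI)
    fix i assume i: "i < m"
    have r: "(\<Sum>j<Suc m. if j = Suc i then 0 else \<bar>A (Suc i) j\<bar>) < A (Suc i) (Suc i)"
      using dom i by auto
    have s0: "A (Suc i) 0 = c i" using sym i c_def by auto
    define B where "B = (\<Sum>j<m. if j = i then 0 else \<bar>A (Suc i) (Suc j)\<bar>)"
    have r': "\<bar>c i\<bar> + B < A (Suc i) (Suc i)"
      using r s0 unfolding sum.lessThan_Suc_shift by (simp add: B_def)
    have cs: "(\<Sum>j<m. if j = i then 0 else \<bar>c j\<bar>) = (\<Sum>j<m. \<bar>c j\<bar>) - \<bar>c i\<bar>"
      using sum_if_skip[OF i, of "\<lambda>j. \<bar>c j\<bar>"] by simp
    have "(\<Sum>j<m. if j = i then 0 else \<bar>A' i j\<bar>) \<le>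
          (\<Sum>j<m. (if j = i then 0 else \<bar>A (Suc i) (Suc j)\<bar>) + \<bar>c i\<bar> / a * (if j = i then 0 else \<bar>c j\<bar>))"
      by (rule sum_mono) (use abs_sub_div_le[OF apos] in \<open>auto simp: A'_def simp del: times_divide_eq_left\<close>)
    also have "\<dots> = B + \<bar>c i\<bar> / a * ((\<Sum>j<m. \<bar>c j\<bar>) - \<bar>c i\<bar>)"
      unfolding sum.distrib B_def sum_distrib_left[symmetric] cs ..
    also have "\<dots> \<le> B + \<bar>c i\<bar> / a * (a - \<bar>c i\<bar>)"
      using S apos by (intro add_left_mono mult_left_mono) auto
    also have "\<dots> = B + \<bar>c i\<bar> - c i * c i / a"
      using apos by (simp add: field_simps abs_mult_self_eq)
    also have "\<dots> < A' i i" using r' by (simp add: A'_def)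
    finally show "(\<Sum>j<m. if j = i then 0 else \<bar>A' i j\<bar>) < A' i i" .
  qed
  obtain L' where L': "\<forall>i<m. \<forall>j<m. (\<Sum>k<m. L' i k * L' j k) = A' i j"
    using Suc.IH[OF sym' dom'] by blast
  define L where "L i k = (if i = 0 then (if k = 0 then sqrt a else 0)
       else if k = 0 then A 0 i / sqrt a else L' (i - 1) (k - 1))" for i k
  have sa: "sqrt a * sqrt a = a" using apos by simp
  have sa0: "sqrt a \<noteq> 0" using apos by simp
  show ?case
  proof (intro exI[of _ L] conjI allI impI)
    fix i j assume i: "i < Suc m" and j: "j < Suc m"
    have ex: "(\<Sum>k<Suc m. L i k * L j k) = L i 0 * L j 0 + (\<Sum>k<m. L i (Suc k) * L j (Suc k))"
      by (simp only: sum.lessThan_Suc_shift)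
    show "(\<Sum>k<Suc m. L i k * L j k) = A i j"
    proof (cases i)
      case 0
      then show ?thesis
      proof (cases j)
        case 0 then show ?thesis using \<open>i = 0\<close> ex sa by (simp add: L_def a_def)
      next
        case (Suc j') then show ?thesis using \<open>i = 0\<close> ex sa0 by (simp add: L_def)
      qed
    next
      case (Suc i')
      then show ?thesis
      proof (cases j)
        case 0 then show ?thesis using \<open>i = Suc i'\<close> ex sa0 sym i by (simp add: L_def)
      next
        case (Suc j')
        have "(\<Sum>k<m. L i (Suc k) * L j (Suc k)) = A' i' j'"
          using L' \<open>i = Suc i'\<close> \<open>j = Suc j'\<close> i j by (simp add: L_def)
        then show ?thesis using \<open>i = Suc i'\<close> \<open>j = Suc j'\<close> ex sa
          by (simp add: L_def A'_def c_def)
      qed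
    qed
  next
    show "L 0 0 = sqrt (A 0 0)" by (simp add: L_def a_def)
  next
    fix k :: nat assume "k > 0" then show "L 0 k = 0" by (simp add: L_def)
  qed
qed



definition hel :: "nat \<Rightarrow> nat \<Rightarrow> nat \<Rightarrow> real" where
  "hel d k l = (if k = 0 then 1 / sqrt (real d) else if l < k then 1 / sqrt (real k * (real k + 1))
     else if l = k then - real k / sqrt (real k * (real k + 1)) else 0)"

lemma hel_sum:
  assumes "0 < k" "k < d"
  shows "(\<Sum>l<d. hel d k l * \<phi> l) = ((\<Sum>l<k. \<phi> l) - real k * \<phi> k) / sqrt (real k * (real k + 1))"
proof -
  let ?s = "sqrt (real k * (real k + 1))"
  let ?f = "\<lambda>l. hel d k l * \<phi> l"
  have "(\<Sum>l<d. ?f l) = (\<Sum>l\<in>{0..<Suc k}. ?f l) + (\<Sum>l\<in>{Suc k..<d}. ?f l)"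
    unfolding lessThan_atLeast0 by (rule sum.atLeastLessThan_concat[symmetric]) (use assms in auto)
  also have "(\<Sum>l\<in>{Suc k..<d}. ?f l) = 0" by (rule sum.neutral) (use assms in \<open>auto simp: hel_def\<close>)
  also have "(\<Sum>l\<in>{0..<Suc k}. ?f l) = ?f k + (\<Sum>l<k. ?f l)"
    by (simp add: lessThan_atLeast0[symmetric])
  also have "(\<Sum>l<k. ?f l) = (\<Sum>l<k. \<phi> l / ?s)"
    by (rule sum.cong) (auto simp: hel_def assms)
  also have "\<dots> = (\<Sum>l<k. \<phi> l) / ?s" by (simp add: sum_divide_distrib)
  finally show ?thesis using assms by (simp add: hel_def diff_divide_distrib)
qed

lemma hel_orth:
  assumes "k < d" "k' < d"
  shows "(\<Sum>l<d. hel d k l * hel d k' l) = (if k = k' then 1 else 0)"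
proof -
  have d0: "real d > 0" using assms by simp
  have key: "(\<Sum>l<d. hel d k l * hel d k' l) = (if k = k' then 1 else 0)" if "k < d" "k' < d" "k \<le> k'" for k k'
  proof (cases "k' = 0")
    case True
    then have "k = 0" using that by simp
    then show ?thesis using True d0 by (simp add: hel_def)
  next
    case False
    have sp: "sqrt (real k' * (real k' + 1)) > 0" using False by simp
    show ?thesis
    proof (cases "k = 0")
      case True
      have "(\<Sum>l<d. hel d k l * hel d k' l) = (\<Sum>l<d. hel d k' l * (1 / sqrt d))"
        using True by (simp add: hel_def mult.commute)
      also have "\<dots> = 0" using hel_sum[of k' d "\<lambda>l. 1 / sqrt d"] False that by simp
      finally show ?thesis using True False by simp
    next
      case k0: False
      show ?thesis
      proof (cases "k = k'")
        case True
        have "(\<Sum>l<d. hel d k l * hel d k' l) =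
            ((\<Sum>l<k. 1 / sqrt (real k * (real k + 1))) - real k * (- real k / sqrt (real k * (real k + 1)))) / sqrt (real k * (real k + 1))"
          using hel_sum[of k d "hel d k"] k0 that True by (simp add: hel_def)
        also have "\<dots> = (real k + real k * real k) / (sqrt (real k * (real k + 1)) * sqrt (real k * (real k + 1)))"
          by (simp add: field_simps)
        also have "\<dots> = 1"
        proof -
          have "real k + real k * real k > 0" using k0 by (simp add: add_pos_nonneg)
          then show ?thesis by (simp add: algebra_simps)
        qed
        finally show ?thesis using True by simp
      next
        case False
        then have lt: "k < k'" using that by simp
        have "(\<Sum>l<d. hel d k l * hel d k' l) =
            ((\<Sum>l<k. 1 / sqrt (real k' * (real k' + 1))) - real k * (1 / sqrt (real k' * (real k' + 1)))) / sqrt (real k * (real k + 1))"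
        proof -
          have "(\<Sum>l<k. hel d k' l) = (\<Sum>l<k. 1 / sqrt (real k' * (real k' + 1)))"
            by (rule sum.cong) (use lt k0 in \<open>auto simp: hel_def\<close>)
          moreover have "hel d k' k = 1 / sqrt (real k' * (real k' + 1))" using lt k0 by (simp add: hel_def)
          ultimately show ?thesis using hel_sum[of k d "hel d k'"] k0 that by simp
        qed
        also have "\<dots> = 0" by simp
        finally show ?thesis using False by simp
      qed
    qed
  qed
  show ?thesis
  proof (cases "k \<le> k'")
    case True then show ?thesis using key assms by blast
  next
    case False
    then show ?thesis using key[of k' k] assms by (simp add: mult.commute)
  qed
qed

lemma gram_sum:
  fixes g :: "nat \<Rightarrow> nat \<Rightarrow> real"
  assumes "\<And>k k'. k < T \<Longrightarrow> k' < T \<Longrightarrow> (\<Sum>l<d. g k l * g k' l) = (if k = k' then 1 else 0)"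
  shows "(\<Sum>l<d. (\<Sum>k<T. a k * g k l) * (\<Sum>k<T. b k * g k l)) = (\<Sum>k<T. a k * b k)"
proof -
  have "(\<Sum>l<d. (\<Sum>k<T. a k * g k l) * (\<Sum>k<T. b k * g k l)) =
        (\<Sum>l<d. \<Sum>k<T. \<Sum>k'<T. a k * g k l * (b k' * g k' l))"
    by (simp add: sum_product)
  also have "\<dots> = (\<Sum>k<T. \<Sum>l<d. \<Sum>k'<T. a k * g k l * (b k' * g k' l))"
    by (rule sum.swap)
  also have "\<dots> = (\<Sum>k<T. \<Sum>k'<T. \<Sum>l<d. a k * g k l * (b k' * g k' l))"
    by (rule sum.cong[OF refl], rule sum.swap)
  also have "\<dots> = (\<Sum>k<T. \<Sum>k'<T. a k * b k' * (\<Sum>l<d. g k l * g k' l))"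
    by (simp add: sum_distrib_left mult_ac)
  also have "\<dots> = (\<Sum>k<T. \<Sum>k'<T. (if k = k' then a k * b k' else 0))"
    by (rule sum.cong[OF refl], rule sum.cong[OF refl]) (simp add: assms)
  also have "\<dots> = (\<Sum>k<T. a k * b k)" by simp
  finally show ?thesis .
qed


theorem mainTheorem10:
  fixes t k d :: nat and \<beta> :: real
    and X :: "nat \<Rightarrow> nat \<Rightarrow> real" and Z :: "nat \<Rightarrow> real"
  assumes "1 \<le> t" and "t \<le> k" and "d \<ge> k + 1"
    and "0 < \<beta>" and "\<beta> \<le> 1/2"
    and "\<forall>i<t. \<forall>j<t. X i j = X j i"
    and "\<forall>i<t. \<forall>j<t. \<bar>X i j\<bar> \<le> \<beta> / (real t + 1)"
    and "\<forall>i<t. \<bar>Z i\<bar> \<le> \<beta> / (real t + 1)"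
  shows "\<exists>y :: nat \<Rightarrow> nat \<Rightarrow> real.
           (\<forall>i<t. \<forall>l<d. \<bar>y i l\<bar> \<le> 1) \<and>
           (\<forall>i<t. \<forall>j<t. i \<noteq> j \<longrightarrow> X i j = (\<Sum>l<d. y i l * y j l)) \<and>
           (\<forall>i<t. X i i = (\<Sum>l<d. y i l * y i l) - \<beta>) \<and>
           (\<forall>i<t. Z i = (\<Sum>l<d. y i l))"
proof -
  note symX = assms(6) and bX = assms(7) and bZ = assms(8)
  define b where "b = \<beta> / (real t + 1)"
  have tpos: "real t \<ge> 1" using assms(1) by simp
  have bpos: "b > 0" using assms(4) by (simp add: b_def)
  have bt: "\<beta> = b * (real t + 1)" by (simp add: b_def)
  have dd: "real d \<ge> 2" using assms(1-3) by simp
  have td: "Suc t \<le> d" using assms(2,3) by simp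
  define A where "A i j = (if i = 0 then (if j = 0 then 1 / real d else Z (j - 1) / real d)
      else if j = 0 then Z (i - 1) / real d else X (i - 1) (j - 1) + (if i = j then \<beta> else 0))" for i j
  have symA: "\<forall>i<Suc t. \<forall>j<Suc t. A i j = A j i"
  proof (intro allI impI)
    fix i j assume "i < Suc t" "j < Suc t"
    then show "A i j = A j i" using symX
      by (cases i; cases j) (auto simp: A_def)
  qed
  have domA: "\<forall>i<Suc t. (\<Sum>j<Suc t. if j = i then 0 else \<bar>A i j\<bar>) < A i i"
  proof (intro allI impI)
    fix i assume i: "i < Suc t"
    show "(\<Sum>j<Suc t. if j = i then 0 else \<bar>A i j\<bar>) < A i i"
    proof (cases i)
      case 0
      have "(\<Sum>j<Suc t. if j = i then 0 else \<bar>A i j\<bar>) = (\<Sum>j<t. \<bar>Z j\<bar> / real d)"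
        unfolding sum.lessThan_Suc_shift using 0 by (simp add: A_def)
      also have "\<dots> = (\<Sum>j<t. \<bar>Z j\<bar>) / real d" by (simp add: sum_divide_distrib)
      also have "\<dots> < 1 / real d"
      proof -
        have "(\<Sum>j<t. \<bar>Z j\<bar>) \<le> real (card {..<t}) * b"
          by (rule sum_bounded_above) (use bZ in \<open>auto simp: b_def\<close>)
        also have "\<dots> = real t * b" by simp
        also have "\<dots> < 1" using bt assms(5) bpos by (simp add: algebra_simps) 
        finally show ?thesis using dd by (simp add: divide_strict_right_mono)
      qed
      finally show ?thesis using 0 by (simp add: A_def)
    next
      case (Suc i')
      have i': "i' < t" using i Suc by simp
      have "(\<Sum>j<Suc t. if j = i then 0 else \<bar>A i j\<bar>) =
            \<bar>Z i'\<bar> / real d + (\<Sum>j<t. if j = i' then 0 else \<bar>X i' j\<bar>)"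
        unfolding sum.lessThan_Suc_shift Suc by (auto simp: A_def intro!: sum.cong)
      also have "\<dots> < b + (real t - 1) * b"
      proof -
        have "\<bar>Z i'\<bar> / real d \<le> b / real d" using bZ i' dd by (intro divide_right_mono) (auto simp: b_def)
        also have "\<dots> < b" using bpos dd by (simp add: divide_less_eq)
        finally have 1: "\<bar>Z i'\<bar> / real d < b" .
        have "(\<Sum>j<t. if j = i' then 0 else \<bar>X i' j\<bar>) \<le> (\<Sum>j<t. if j = i' then 0 else b)"
          by (rule sum_mono) (use bX i' in \<open>auto simp: b_def\<close>)
        also have "\<dots> = real t * b - b" using sum_if_skip[OF i', of "\<lambda>j. b"] by simp
        finally show ?thesis using 1 by (simp add: algebra_simps)
      qed
      also have "\<dots> \<le> A i i"
      proof -
        have "\<bar>X i' i'\<bar> \<le> b" using bX i' by (simp add: b_def)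
        then show ?thesis using Suc bt by (simp add: A_def algebra_simps)
      qed
      finally show ?thesis .
    qed
  qed
  obtain L where L: "\<forall>i<Suc t. \<forall>j<Suc t. (\<Sum>k<Suc t. L i k * L j k) = A i j"
    and L00: "L 0 0 = sqrt (A 0 0)" and L0k: "\<forall>k>0. L 0 k = 0"
    using chol[OF symA domA] by blast
  define y where "y i l = (\<Sum>k<Suc t. L (Suc i) k * hel d k l)" for i l
  have orth: "\<And>k k'. k < Suc t \<Longrightarrow> k' < Suc t \<Longrightarrow> (\<Sum>l<d. hel d k l * hel d k' l) = (if k = k' then 1 else 0)"
    using hel_orth td by simp
  have gram: "(\<Sum>l<d. y i l * y j l) = X i j + (if i = j then \<beta> else 0)" if "i < t" "j < t" for i j
  proof -
    have "(\<Sum>l<d. y i l * y j l) = (\<Sum>k<Suc t. L (Suc i) k * L (Suc j) k)"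
      unfolding y_def by (rule gram_sum[OF orth])
    also have "\<dots> = A (Suc i) (Suc j)" using L that by simp
    finally show ?thesis by (simp add: A_def)
  qed
  have sumy: "(\<Sum>l<d. y i l) = Z i" if "i < t" for i
  proof -
    have sd: "sqrt (real d) > 0" using dd by simp
    have "(\<Sum>l<d. y i l) = (\<Sum>l<d. y i l * (\<Sum>k<Suc t. (if k = 0 then sqrt (real d) else 0) * hel d k l))"
    proof (rule sum.cong[OF refl])
      fix l assume "l \<in> {..<d}"
      have "(\<Sum>k<Suc t. (if k = 0 then sqrt (real d) else 0) * hel d k l) = sqrt (real d) * hel d 0 l"
        unfolding sum.lessThan_Suc_shift by simp
      also have "\<dots> = 1" using sd by (simp add: hel_def)
      finally show "y i l = y i l * (\<Sum>k<Suc t. (if k = 0 then sqrt (real d) else 0) * hel d k l)" by simp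
    qed
    also have "\<dots> = (\<Sum>k<Suc t. L (Suc i) k * (if k = 0 then sqrt (real d) else 0))"
      unfolding y_def by (rule gram_sum[OF orth])
    also have "\<dots> = L (Suc i) 0 * sqrt (real d)"
      unfolding sum.lessThan_Suc_shift by simp
    finally have e1: "(\<Sum>l<d. y i l) = L (Suc i) 0 * sqrt (real d)" .
    have "(\<Sum>k<Suc t. L 0 k * L (Suc i) k) = A 0 (Suc i)" using L that by simp
    moreover have "(\<Sum>k<Suc t. L 0 k * L (Suc i) k) = L 0 0 * L (Suc i) 0"
      unfolding sum.lessThan_Suc_shift using L0k by simp
    ultimately have "sqrt (1 / real d) * L (Suc i) 0 = Z i / real d"
      using L00 by (simp add: A_def)
    then have "L (Suc i) 0 = Z i / real d * sqrt (real d)"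
      using sd by (simp add: real_sqrt_divide field_simps)
    then show ?thesis using e1 sd dd
      by (simp add: mult.assoc)
  qed
  show ?thesis
  proof (intro exI[of _ y] conjI allI impI)
    fix i l assume i: "i < t" and l: "l < d"
    have "(y i l)\<^sup>2 \<le> (\<Sum>l<d. y i l * y i l)"
      unfolding power2_eq_square by (rule member_le_sum[where f="\<lambda>l. y i l * y i l"]) (use l in auto)
    also have "\<dots> = X i i + \<beta>" using gram[OF i i] by simp
    also have "\<dots> \<le> 1"
    proof -
      have "\<bar>X i i\<bar> \<le> b" using bX i by (simp add: b_def)
      moreover have "b \<le> \<beta> / 2" using tpos assms(4) by (simp add: b_def field_simps)
      ultimately show ?thesis using assms(5) by linarith
    qed
    finally show "\<bar>y i l\<bar> \<le> 1" by (simp add: abs_square_le_1)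
  next
    fix i j assume "i < t" "j < t" "i \<noteq> j"
    then show "X i j = (\<Sum>l<d. y i l * y j l)" using gram by simp
  next
    fix i assume "i < t" then show "X i i = (\<Sum>l<d. y i l * y i l) - \<beta>" using gram by simp
  next
    fix i assume "i < t" then show "Z i = (\<Sum>l<d. y i l)" using sumy by simp
  qed
qed

end
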